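(* Let $\mathcal{P}\subset\mathbb{R}^d$ be a finite set of item vectors, $\bm{q}\in\mathbb{R}^d$, $k>1$ an integer, $\lambda\in[0,1]$, $\mu>0$, and assume $\langle\bm{x},\bm{y}\rangle\ge0$ for all $\bm{x},\bm{y}\in\mathcal{P}\cup\{\bm{q}\}$. Let $\mathcal{N}\subseteq\mathcal{P}$ be nonempty with center $\bm{c}=\frac{1}{|\mathcal{N}|}\sum_{\bm{p}\in\mathcal{N}}\bm{p}$ and radius $r=\max_{\bm{p}\in\mathcal{N}}\|\bm{p}-\bm{c}\|$. Then for every $\mathcal{S}\subseteq\mathcal{P}$, and for $\Delta_f$ equal to either $\Delta_{f_{avg}}$ or $\Delta_{f_{max}}$, $$\max_{\bm{p}\in\mathcal{N}}\Delta_f(\bm{p},\mathcal{S})\le\tfrac{\lambda}{k}\big(\langle\bm{q},\bm{c}\rangle+r\|\bm{q}\|\big).$$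
   Context: $\Delta_{f_{avg}}(\bm{p},\mathcal{S}) = \frac{\lambda}{k}\langle\bm{p},\bm{q}\rangle - \frac{2\mu(1-\lambda)}{k(k-1)}\sum_{\bm{p}'\in\mathcal{S}}\langle\bm{p},\bm{p}'\rangle$ and $\Delta_{f_{max}}(\bm{p},\mathcal{S}) = \frac{\lambda}{k}\langle\bm{p},\bm{q}\rangle - \mu(1-\lambda)\big(\max_{\bm{p}_x\ne\bm{p}_y\in\mathcal{S}\cup\{\bm{p}\}}\langle\bm{p}_x,\bm{p}_y\rangle - \max_{\bm{p}_x\ne\bm{p}_y\in\mathcal{S}}\langle\bm{p}_x,\bm{p}_y\rangle\big)$, where a maximum over an empty collection of pairs is taken to be $0$. These are the marginal gains of the diversity-aware objectives $f_{avg}(\mathcal{S}) = \frac{\lambda}{k}\sum_{\bm{p}\in\mathcal{S}}\langle\bm{p},\bm{q}\rangle - \frac{2\mu(1-\lambda)}{k(k-1)}\sum_{\{\bm{p},\bm{p}'\}\subseteq\mathcal{S}}\langle\bm{p},\bm{p}'\rangle$ and $f_{max}(\mathcal{S}) = \frac{\lambda}{k}\sum_{\bm{p}\in\mathcal{S}}\langle\bm{p},\bm{q}\rangle-\mu(1-\lambda)\max_{\bm{p}\ne\bm{p}'\in\mathcal{S}}\langle\bm{p},\bm{p}'\rangle$. The set $\mathcal{N}$ plays the role of a node of a ball tree (BC-Tree) storing its centroid and radius. *)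

theory Defs
  imports "HOL-Analysis.Analysis"
begin

definition max_pair_ip :: "('a::real_inner) set \<Rightarrow> real" where
  "max_pair_ip T =
     (let V = {x \<bullet> y | x y. x \<in> T \<and> y \<in> T \<and> x \<noteq> y}
      in if V = {} then 0 else Max V)"

definition delta_avg :: "real \<Rightarrow> real \<Rightarrow> nat \<Rightarrow> ('a::real_inner) \<Rightarrow> 'a \<Rightarrow> 'a set \<Rightarrow> real" where
  "delta_avg lam mu k q p S =
     lam / real k * (p \<bullet> q)
     - 2 * mu * (1 - lam) / (real k * (real k - 1)) * (\<Sum>p'\<in>S. p \<bullet> p')"

definition delta_max :: "real \<Rightarrow> real \<Rightarrow> nat \<Rightarrow> ('a::real_inner) \<Rightarrow> 'a \<Rightarrow> 'a set \<Rightarrow> real" where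
  "delta_max lam mu k q p S =
     lam / real k * (p \<bullet> q)
     - mu * (1 - lam) * (max_pair_ip (S \<union> {p}) - max_pair_ip S)"

definition centroid :: "('a::real_vector) set \<Rightarrow> 'a" where
  "centroid N = (1 / real (card N)) *\<^sub>R (\<Sum>p\<in>N. p)"

definition radius :: "('a::real_normed_vector) set \<Rightarrow> real" where
  "radius N = Max ((\<lambda>p. norm (p - centroid N)) ` N)"

end

theory Submission
  imports Defs
begin

lemma mpi_mono:
  fixes S T :: "('a::real_inner) set"
  assumes "finite T" "S \<subseteq> T" "\<forall>x\<in>T. \<forall>y\<in>T. x \<bullet> y \<ge> 0"
  shows "max_pair_ip S \<le> max_pair_ip T"
proof -
  let ?VS = "{x \<bullet> y | x y. x \<in> S \<and> y \<in> S \<and> x \<noteq> y}"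
  let ?VT = "{x \<bullet> y | x y. x \<in> T \<and> y \<in> T \<and> x \<noteq> y}"
  have fin: "finite ?VT"
  proof -
    have "?VT \<subseteq> (\<lambda>(x,y). x \<bullet> y) ` (T \<times> T)" by auto
    thus ?thesis using assms(1) finite_subset by blast
  qed
  have sub: "?VS \<subseteq> ?VT" using assms(2) by blast
  have nn: "\<forall>v\<in>?VT. 0 \<le> v" using assms(3) by auto
  show ?thesis
  proof (cases "?VS = {}")
    case True
    have "0 \<le> max_pair_ip T"
    proof (cases "?VT = {}")
      case False
      then obtain v where v: "v \<in> ?VT" by blast
      then have "0 \<le> v" using nn by blast
      also have "v \<le> Max ?VT" using fin v by (rule Max_ge)
      finally show ?thesis using False unfolding max_pair_ip_def Let_def by simp
    qed (simp add: max_pair_ip_def)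
    then show ?thesis using True unfolding max_pair_ip_def Let_def by simp
  next
    case False
    then have "?VT \<noteq> {}" using sub by blast
    have e1: "max_pair_ip S = Max ?VS" unfolding max_pair_ip_def Let_def using False by (simp only: if_False)
    have e2: "max_pair_ip T = Max ?VT" unfolding max_pair_ip_def Let_def using \<open>?VT \<noteq> {}\<close> by (simp only: if_False)
    show ?thesis unfolding e1 e2 using Max_mono[OF sub False fin] .
  qed
qed

lemma ip_bound:
  fixes p q :: "'a::real_inner"
  assumes "norm (p - c) \<le> r"
  shows "p \<bullet> q \<le> q \<bullet> c + r * norm q"
proof -
  have "p \<bullet> q = c \<bullet> q + (p - c) \<bullet> q" by (simp add: inner_diff_left)
  also have "(p - c) \<bullet> q \<le> norm (p - c) * norm q" by (rule Cauchy_Schwarz_ineq2[THEN order_trans[OF abs_ge_self]])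
  also have "\<dots> \<le> r * norm q" using assms by (simp add: mult_right_mono)
  finally show ?thesis by (simp add: inner_commute)
qed

theorem theorem4:
  fixes P N S :: "(real ^ 'd) set" and q :: "real ^ 'd"
    and k :: nat and lam mu :: real
  assumes "finite P"
    and "k > 1"
    and "0 \<le> lam" and "lam \<le> 1"
    and "mu > 0"
    and "\<forall>x \<in> P \<union> {q}. \<forall>y \<in> P \<union> {q}. x \<bullet> y \<ge> 0"
    and "N \<subseteq> P" and "N \<noteq> {}"
    and "S \<subseteq> P"
  shows "Max ((\<lambda>p. delta_avg lam mu k q p S) ` N)
           \<le> lam / real k * (q \<bullet> centroid N + radius N * norm q)
       \<and> Max ((\<lambda>p. delta_max lam mu k q p S) ` N)
           \<le> lam / real k * (q \<bullet> centroid N + radius N * norm q)"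
proof -
  have finN: "finite N" using assms(1,7) finite_subset by blast
  have finS: "finite S" using assms(1,9) finite_subset by blast
  have lk: "lam / real k \<ge> 0" using assms by simp
  have pb: "lam / real k * (p \<bullet> q) \<le> lam / real k * (q \<bullet> centroid N + radius N * norm q)"
    if "p \<in> N" for p
  proof -
    have "norm (p - centroid N) \<le> radius N" unfolding radius_def
      using finN that by (auto intro: Max_ge)
    then show ?thesis using ip_bound lk mult_left_mono by blast
  qed
  have A: "delta_avg lam mu k q p S \<le> lam / real k * (q \<bullet> centroid N + radius N * norm q)"
    if "p \<in> N" for p
  proof -
    have "(\<Sum>p'\<in>S. p \<bullet> p') \<ge> 0" using assms(6,7,9) that by (intro sum_nonneg) blast
    moreover have "2 * mu * (1 - lam) / (real k * (real k - 1)) \<ge> 0"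
      using assms(2,4,5) by (simp add: divide_nonneg_pos)
    ultimately have "2 * mu * (1 - lam) / (real k * (real k - 1)) * (\<Sum>p'\<in>S. p \<bullet> p') \<ge> 0"
      by (rule mult_nonneg_nonneg[OF _ _, rotated])
    then show ?thesis unfolding delta_avg_def using pb[OF that] by linarith
  qed
  have B: "delta_max lam mu k q p S \<le> lam / real k * (q \<bullet> centroid N + radius N * norm q)"
    if "p \<in> N" for p
  proof -
    have "max_pair_ip S \<le> max_pair_ip (S \<union> {p})"
    proof (rule mpi_mono)
      have "S \<union> {p} \<subseteq> P" using assms(7,9) that by blast
      then show "\<forall>x\<in>S \<union> {p}. \<forall>y\<in>S \<union> {p}. 0 \<le> x \<bullet> y" using assms(6) by blast
    qed (use finS in auto)
    moreover have "mu * (1 - lam) \<ge> 0" using assms by simp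
    ultimately have "mu * (1 - lam) * (max_pair_ip (S \<union> {p}) - max_pair_ip S) \<ge> 0" by simp
    then show ?thesis unfolding delta_max_def using pb[OF that] by linarith
  qed
  show ?thesis using A B finN assms(8) by (simp add: Max_le_iff)
qed

end
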